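(* There exist constants $\delta>0$, $c>0$, $C>0$ and $N_0$ such that for every prime $N\ge N_0$: (i) there exists an integer $b\in[1,W)$ with $\gcd(b,W)=1$ such that $\frac1N\sum_{n=0}^{N-1}f_b(n)\ge\delta$; (ii) for every integer $b\in[1,W)$ with $\gcd(b,W)=1$ and every $n\in\{0,\dots,N-1\}$, one has $0\le f_b(n)\le c\,\nu_b(n)$ and $f_b(n)\le C\log N$.
   Context: Fix a $C^\infty$ function $\chi:\mathbb{R}\to[0,\infty)$ supported in $[-1,1]$ with $\chi(0)>0$ and $\int_0^\infty\chi'(x)^2\,dx=1$. Fix $\alpha\in(0,1/2)$. For a prime $N$ (large), let $w=w(N)=\lfloor\log\log N\rfloor$, $W=\prod_{p\le w,\ p\text{ prime}}p$, $R=N^\alpha$. $\mu$ is the Möbius function ($\mu(1)=1$, $\mu(d)=(-1)^\ell$ if $d$ is a product of $\ell$ distinct primes, $0$ otherwise) and $\phi$ is Euler's totient function. Set $\lambda(n)=\sum_{d\mid n,\ d\ge1}\mu(d)\chi\bigl(\frac{\log d}{\log R}\bigr)$ for integers $n\ge1$. For an integer $b$, define on $\{0,\dots,N-1\}$: $f_b(n)=\frac{\phi(W)}{W}\log(Wn+b)$ if $Wn+b\ge R$ and $Wn+b$ is prime, and $f_b(n)=0$ otherwise; and $\nu_b(n)=\frac{\phi(W)}{W}\log R\cdot\lambda(Wn+b)^2$. *)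

theory Defs
  imports "HOL-Analysis.Analysis" "HOL-Number_Theory.Number_Theory" "HOL-Computational_Algebra.Squarefree"
begin

definition smooth_real :: "(real \<Rightarrow> real) \<Rightarrow> bool" where
  "smooth_real f \<longleftrightarrow> (\<exists>D :: nat \<Rightarrow> real \<Rightarrow> real. D 0 = f \<and>
      (\<forall>k x. (D k has_real_derivative D (Suc k) x) (at x)))"

definition mobius :: "nat \<Rightarrow> int" where
  "mobius d = (if d = 0 then 0 else if squarefree d then (-1) ^ card (prime_factors d) else 0)"

definition wN :: "nat \<Rightarrow> nat" where
  "wN N = nat \<lfloor>ln (ln (real N))\<rfloor>"

definition WN :: "nat \<Rightarrow> nat" where
  "WN N = (\<Prod>p\<in>{p. prime p \<and> p \<le> wN N}. p)"

definition RN :: "real \<Rightarrow> nat \<Rightarrow> real" where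
  "RN \<alpha> N = real N powr \<alpha>"

definition lam :: "(real \<Rightarrow> real) \<Rightarrow> real \<Rightarrow> nat \<Rightarrow> real" where
  "lam chi R n = (\<Sum>d\<in>{d. d dvd n}. real_of_int (mobius d) * chi (ln (real d) / ln R))"

definition fb :: "real \<Rightarrow> nat \<Rightarrow> nat \<Rightarrow> nat \<Rightarrow> real" where
  "fb \<alpha> N b n = (let W = WN N; m = W * n + b in
     if real m \<ge> RN \<alpha> N \<and> prime m then real (totient W) / real W * ln (real m) else 0)"

definition nub :: "(real \<Rightarrow> real) \<Rightarrow> real \<Rightarrow> nat \<Rightarrow> nat \<Rightarrow> nat \<Rightarrow> real" where
  "nub chi \<alpha> N b n = (let W = WN N; R = RN \<alpha> N in
     real (totient W) / real W * ln R * (lam chi R (W * n + b))\<^sup>2)"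

end

theory Submission imports Defs "HOL-Real_Asymp.Real_Asymp" begin

lemma mult_lt_self:
  fixes p m :: nat assumes "prime p" "m > 0"
  shows "multiplicity p m < m"
proof -
  have "p ^ multiplicity p m dvd m" by (rule multiplicity_dvd)
  hence "p ^ multiplicity p m \<le> m" using assms(2) by (rule dvd_imp_le)
  moreover have "2 ^ multiplicity p m \<le> p ^ multiplicity p m"
    using prime_ge_2_nat[OF assms(1)] by (simp add: power_mono)
  moreover have "multiplicity p m < 2 ^ multiplicity p m" by simp
  ultimately show ?thesis by linarith
qed

lemma legendre_aux:
  fixes p :: nat assumes p: "prime p"
  shows "n \<le> K \<Longrightarrow> multiplicity p (fact n :: nat) = (\<Sum>i\<in>{1..K}. n div p^i)"
proof (induction n)
  case 0
  then show ?case by simp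
next
  case (Suc n)
  have IH: "multiplicity p (fact n :: nat) = (\<Sum>i\<in>{1..K}. n div p^i)" using Suc by simp
  have "multiplicity p (fact (Suc n) :: nat) = multiplicity p (Suc n) + multiplicity p (fact n :: nat)"
    using p by (simp only: fact_Suc of_nat_id, subst prime_elem_multiplicity_mult_distrib) auto
  also have "multiplicity p (Suc n) = card {i\<in>{1..K}. p^i dvd Suc n}"
  proof -
    have "p \<noteq> 1" using p by auto
    hence pd: "p^i dvd Suc n \<longleftrightarrow> i \<le> multiplicity p (Suc n)" for i
      using power_dvd_iff_le_multiplicity[of "Suc n" p i] by simp
    have "{i\<in>{1..K}. p^i dvd Suc n} = {1..multiplicity p (Suc n)}"
      using mult_lt_self[OF p, of "Suc n"] Suc.prems
      unfolding pd by auto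
    thus ?thesis by simp
  qed
  also have "\<dots> = (\<Sum>i\<in>{1..K}. if p^i dvd Suc n then 1 else 0)"
    by (simp add: sum.If_cases Int_def conj_commute)
  finally have "multiplicity p (fact (Suc n) :: nat) = (\<Sum>i\<in>{1..K}. n div p^i + (if p^i dvd Suc n then 1 else 0))"
    using IH by (simp add: sum.distrib)
  also have "\<dots> = (\<Sum>i\<in>{1..K}. Suc n div p^i)"
    by (intro sum.cong refl) (auto simp: div_Suc dvd_eq_mod_eq_0)
  finally show ?case .
qed


lemma div_double_le: "(2*n) div (q::nat) \<le> 2 * (n div q) + (if q \<le> 2*n then 1 else 0)"
proof (cases "q \<le> 2*n")
  case True
  show ?thesis
  proof (cases "q = 0")
    case False
    have "n = q * (n div q) + n mod q" by simp
    moreover have "n mod q < q" using False by simp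
    moreover have "q * (2 * (n div q) + 2) = 2*(q*(n div q)) + 2*q" by (simp add: algebra_simps)
    ultimately have "2*n < q * (2 * (n div q) + 2)" by linarith
    hence "2*n div q < 2 * (n div q) + 2" using False
      by (simp add: div_less_iff_less_mult mult.commute)
    thus ?thesis using True by simp
  qed simp
next
  case False
  then show ?thesis by simp
qed

lemma binom_mult_bound:
  fixes p n :: nat assumes p: "prime p" and n: "n > 0"
  shows "p ^ multiplicity p ((2*n) choose n) \<le> 2*n"
proof (rule ccontr)
  define j where "j = multiplicity p ((2*n) choose n)"
  define K where "K = 2*n"
  assume "\<not> p ^ multiplicity p ((2*n) choose n) \<le> 2*n"
  hence big: "2*n < p ^ j" unfolding j_def by simp
  have fe: "fact (2*n) = fact n * fact n * ((2*n) choose n)"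
    using binomial_fact_lemma[of n "2*n"] by simp
  have nz: "((2*n) choose n) \<noteq> 0" by simp
  have "multiplicity p (fact (2*n) :: nat) = multiplicity p (fact n :: nat) + multiplicity p (fact n :: nat) + j"
    unfolding fe j_def using p nz
    by (simp add: prime_elem_multiplicity_mult_distrib del: binomial_eq_0_iff)
  hence eq: "(\<Sum>i\<in>{1..K}. (2*n) div p^i) = 2 * (\<Sum>i\<in>{1..K}. n div p^i) + j"
    using legendre_aux[OF p, of "2*n" K] legendre_aux[OF p, of n K] by (simp add: K_def)
  have "(\<Sum>i\<in>{1..K}. (2*n) div p^i) \<le> (\<Sum>i\<in>{1..K}. 2 * (n div p^i) + (if p^i \<le> 2*n then 1 else 0))"
    by (intro sum_mono div_double_le)
  also have "\<dots> = 2 * (\<Sum>i\<in>{1..K}. n div p^i) + card {i\<in>{1..K}. p^i \<le> 2*n}"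
    by (simp add: sum.distrib sum_distrib_left sum.If_cases Int_def conj_commute)
  finally have jle: "j \<le> card {i\<in>{1..K}. p^i \<le> 2*n}" using eq by simp
  have "{i\<in>{1..K}. p^i \<le> 2*n} \<subseteq> {1..<j}"
  proof
    fix i assume "i \<in> {i\<in>{1..K}. p^i \<le> 2*n}"
    hence pij: "p^i < p^j" "i \<ge> 1" using big by auto
    have "i < j" by (rule power_less_imp_less_exp[OF prime_gt_1_nat[OF p] pij(1)])
    thus "i \<in> {1..<j}" using \<open>i \<ge> 1\<close> by simp
  qed
  hence "card {i\<in>{1..K}. p^i \<le> 2*n} \<le> card {1..<j}" by (intro card_mono) auto
  hence "j \<le> j - 1" using jle by simp
  hence "j = 0" by simp
  thus False using big n by simp
qed

lemma binom_le_pi: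
  fixes n :: nat assumes n: "n > 0"
  shows "(2*n) choose n \<le> (2*n) ^ card {p. prime p \<and> p \<le> 2*n}"
proof -
  define C where "C = (2*n) choose n"
  have C0: "C \<noteq> 0" unfolding C_def by simp
  have "C = (\<Prod>p\<in>prime_factors C. p ^ multiplicity p C)"
    using prod_prime_factors[OF C0] by simp
  also have "\<dots> \<le> (\<Prod>p\<in>prime_factors C. 2*n)"
    by (intro prod_mono) (auto simp: C_def intro!: binom_mult_bound n)
  also have "\<dots> = (2*n) ^ card (prime_factors C)" by simp
  also have "\<dots> \<le> (2*n) ^ card {p. prime p \<and> p \<le> 2*n}"
  proof (intro power_increasing card_mono)
    show "prime_factors C \<subseteq> {p. prime p \<and> p \<le> 2*n}"
    proof
      fix p assume pC: "p \<in> prime_factors C"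
      hence pp: "prime p" and "p dvd C" by auto
      have prime_imp_not_unit: "\<not> is_unit p" using pp by auto
      have "p^1 dvd C" using \<open>p dvd C\<close> by simp
      hence "multiplicity p C \<ge> 1" by (rule multiplicity_geI[OF C0 prime_imp_not_unit])
      hence "p ^ 1 \<le> p ^ multiplicity p C" using pp
        using prime_gt_0_nat[OF pp] by (intro power_increasing) auto
      also have "\<dots> \<le> 2*n" unfolding C_def using pp n by (rule binom_mult_bound)
      finally show "p \<in> {p. prime p \<and> p \<le> 2*n}" using pp by simp
    qed
  qed (use n in auto)
  finally show ?thesis unfolding C_def .
qed


lemma pi_lower_aux:
  fixes X :: nat assumes X: "X \<ge> 2"
  shows "real (card {p. prime p \<and> p \<le> X}) * ln X \<ge> (real X - 1) * ln 2 - ln X"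
proof -
  define n where "n = X div 2"
  have n01: "n > 0" "2*n \<le> X" "X \<le> 2*n + 1" using X unfolding n_def by presburger+
  hence "real X \<le> 2 * real n + 1" by linarith
  with n01 have n: "n > 0" "2*n \<le> X" "real X - 1 \<le> 2 * real n" by auto
  define k where "k = card {p. prime p \<and> p \<le> 2*n}"
  have "4^n / (2*real n) \<le> real ((2*n) choose n)" by (rule central_binomial_lower_bound[OF n(1)])
  also have "\<dots> \<le> real ((2*n) ^ k)" unfolding k_def using binom_le_pi[OF n(1)] by linarith
  finally have "ln (4^n / (2*real n)) \<le> ln (real ((2*n)^k))" using n by (subst ln_le_cancel_iff) auto
  moreover have "ln (real ((2*n)^k)) = real k * ln (2 * real n)"
  proof -
    have "ln (real ((2*n)^k)) = ln ((2*real n)^k)" by simp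
    also have "\<dots> = real k * ln (2 * real n)" by (rule ln_realpow)
    finally show ?thesis .
  qed
  moreover have "ln (4^n / (2*real n)) = real n * ln 4 - ln (2 * real n)"
    using n by (simp add: ln_div ln_realpow)
  ultimately have "real n * ln 4 - ln (2 * real n) \<le> real k * ln (2 * real n)"
    by simp
  moreover have "ln 4 = 2 * ln (2::real)"
    using ln_realpow[of 2 2] by simp
  moreover have "ln (2 * real n) \<le> ln X" "0 \<le> ln (2 * real n)" using n by auto
  moreover have "k \<le> card {p. prime p \<and> p \<le> X}" unfolding k_def using n
    by (intro card_mono) auto
  moreover have "(real X - 1) * ln 2 \<le> (2 * real n) * ln 2"
    using n by (intro mult_right_mono) auto
  moreover have "real n * ln 4 = 2 * real n * ln 2" using \<open>ln 4 = _\<close> by simp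
  ultimately have A: "(real X - 1) * ln 2 - ln X \<le> real k * ln (2 * real n)"
    by linarith
  have "real k * ln (2 * real n) \<le> real (card {p. prime p \<and> p \<le> X}) * ln X"
    using \<open>k \<le> _\<close> \<open>ln (2 * real n) \<le> ln X\<close> \<open>0 \<le> ln (2 * real n)\<close>
    by (intro mult_mono) auto
  with A show ?thesis by linarith
qed

lemma pi_lower: "\<exists>X0. \<forall>X\<ge>X0. real (card {p. prime p \<and> p \<le> X}) * ln (real X) \<ge> real X / 2"
proof -
  have ev1: "eventually (\<lambda>x::real. (x - 1) * (2/3) - ln x \<ge> x / 2) at_top" by real_asymp
  have ev2: "eventually (\<lambda>x::real. x \<ge> 1) at_top" by real_asymp
  have ev0: "eventually (\<lambda>x::real. (x - 1) * (2/3) - ln x \<ge> x / 2 \<and> x \<ge> 1) at_top"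
    using eventually_conj[OF ev1 ev2] .
  have ev: "eventually (\<lambda>x::real. (x - 1) * ln 2 - ln x \<ge> x / 2) at_top"
    using ev0
  proof (rule eventually_mono)
    fix x :: real assume "(x - 1) * (2/3) - ln x \<ge> x / 2 \<and> x \<ge> 1"
    moreover have "(x - 1) * (2/3) \<le> (x - 1) * ln 2" using calculation ln2_ge_two_thirds
      by (intro mult_left_mono) auto
    ultimately show "(x - 1) * ln 2 - ln x \<ge> x / 2" by linarith
  qed
  have "eventually (\<lambda>X::nat. (real X - 1) * ln 2 - ln (real X) \<ge> real X / 2) sequentially"
    using eventually_compose_filterlim[OF ev filterlim_real_sequentially] by simp
  then obtain X0 where X0: "\<And>X. X \<ge> X0 \<Longrightarrow> (real X - 1) * ln 2 - ln (real X) \<ge> real X / 2"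
    by (auto simp: eventually_sequentially)
  show ?thesis
  proof (intro exI[of _ "max X0 2"] allI impI)
    fix X assume "X \<ge> max X0 2"
    thus "real (card {p. prime p \<and> p \<le> X}) * ln (real X) \<ge> real X / 2"
      using X0[of X] pi_lower_aux[of X] by simp
  qed
qed


lemma chi_one:
  fixes chi :: "real \<Rightarrow> real"
  assumes smooth: "smooth_real chi" and supp: "\<And>x. \<bar>x\<bar> > 1 \<Longrightarrow> chi x = 0"
  shows "chi 1 = 0"
proof -
  obtain D where D: "D 0 = chi" "\<And>k x. (D k has_real_derivative D (Suc k) x) (at x)"
    using smooth unfolding smooth_real_def by blast
  have "isCont chi 1" using D(2)[of 0 1] D(1) by (metis DERIV_isCont)
  moreover have "(\<lambda>n. 1 + 1 / real (Suc n)) \<longlonglongrightarrow> 1"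
    using tendsto_add[OF tendsto_const LIMSEQ_inverse_real_of_nat] by (simp add: inverse_eq_divide)
  ultimately have "(\<lambda>n. chi (1 + 1 / real (Suc n))) \<longlonglongrightarrow> chi 1"
    by (rule isCont_tendsto_compose)
  moreover have "chi (1 + 1 / real (Suc n)) = 0" for n
  proof -
    have h: "0 < 1 / real (Suc n)" by simp
    have "\<bar>1 + 1 / real (Suc n)\<bar> = 1 + 1 / real (Suc n)" using h by (intro abs_of_pos) linarith
    hence "\<bar>1 + 1 / real (Suc n)\<bar> > 1" using h by linarith
    thus ?thesis by (rule supp)
  qed
  ultimately have "(\<lambda>n. 0::real) \<longlonglongrightarrow> chi 1" by simp
  thus ?thesis using LIMSEQ_unique[OF _ tendsto_const] by metis
qed

lemma mobius_1: "mobius (Suc 0) = 1" by (simp add: mobius_def)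

lemma mobius_prime: "prime p \<Longrightarrow> mobius p = -1"
  by (simp add: mobius_def squarefree_prime prime_prime_factors)

lemma divisors_prime: "prime (m::nat) \<Longrightarrow> {d. d dvd m} = {1, m}"
  by (auto simp: prime_nat_iff)

lemma lam_prime:
  fixes chi :: "real \<Rightarrow> real"
  assumes m: "prime m" and R: "ln R > 0" "R > 0" "real m \<ge> R"
    and supp: "\<And>x. \<bar>x\<bar> > 1 \<Longrightarrow> chi x = 0" and c1: "chi 1 = 0"
  shows "lam chi R m = chi 0"
proof -
  have m1: "m \<noteq> 1" using m by auto
  have "lam chi R m = chi 0 - chi (ln (real m) / ln R)"
    unfolding lam_def divisors_prime[OF m] using m1 m by (simp add: mobius_1 mobius_prime)
  moreover have "chi (ln (real m) / ln R) = 0"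
  proof -
    have "ln R \<le> ln (real m)" using R by simp
    hence ge: "ln (real m) / ln R \<ge> 1" using R by simp
    show ?thesis
    proof (cases "ln (real m) / ln R = 1")
      case True thus ?thesis using c1 by simp
    next
      case False
      hence "ln (real m) / ln R > 1" using ge by linarith
      hence "\<bar>ln (real m) / ln R\<bar> > 1" by linarith
      thus ?thesis by (rule supp)
    qed
  qed
  ultimately show ?thesis by simp
qed

lemma fb_eq: "fb \<alpha> N b n = (if real (WN N * n + b) \<ge> RN \<alpha> N \<and> prime (WN N * n + b)
   then real (totient (WN N)) / real (WN N) * ln (real (WN N * n + b)) else 0)"
  by (simp add: fb_def Let_def)

lemma nub_eq: "nub chi \<alpha> N b n = real (totient (WN N)) / real (WN N) * ln (RN \<alpha> N) * (lam chi (RN \<alpha> N) (WN N * n + b))\<^sup>2"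
  by (simp add: nub_def Let_def)

lemma exists_ge_avg:
  fixes g :: "'a \<Rightarrow> real"
  assumes "finite B" "B \<noteq> {}" "sum g B \<ge> S"
  shows "\<exists>b\<in>B. g b \<ge> S / real (card B)"
proof (rule ccontr)
  assume "\<not> ?thesis"
  hence "\<forall>b\<in>B. g b < S / real (card B)" by auto
  hence "sum g B < (\<Sum>b\<in>B. S / real (card B))"
    using assms by (intro sum_strict_mono) auto
  also have "\<dots> = S" using assms by simp
  finally show False using assms by simp
qed


lemma W_facts:
  fixes N :: nat
  assumes N3: "N \<ge> 3" and L2: "ln (ln (real N)) \<ge> 2"
    and LL: "ln (ln (real N)) * ln (ln (ln (real N))) \<le> ln (real N)"
  shows "2 \<le> wN N" "real (wN N) \<le> ln (ln (real N))" "2 \<le> WN N" "WN N \<le> N"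
    "\<And>p. prime p \<Longrightarrow> wN N < p \<Longrightarrow> coprime p (WN N)"
proof -
  define L where "L = ln (ln (real N))"
  define w where "w = wN N"
  define Pw where "Pw = {p::nat. prime p \<and> p \<le> w}"
  have wdef: "w = nat \<lfloor>L\<rfloor>" unfolding w_def wN_def L_def ..
  have fl: "\<lfloor>L\<rfloor> \<ge> 2" using L2 unfolding L_def by linarith
  have w2: "w \<ge> 2" unfolding wdef using fl by linarith
  have wL: "real w \<le> L" unfolding wdef using fl by linarith
  show "2 \<le> wN N" "real (wN N) \<le> ln (ln (real N))" using w2 wL unfolding w_def L_def by auto
  have fin: "finite Pw" unfolding Pw_def by (rule finite_subset[of _ "{..w}"]) auto
  have Wdef: "WN N = prod id Pw" unfolding WN_def Pw_def w_def by simp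
  have "2 \<in> Pw" unfolding Pw_def using w2 by simp
  hence "id 2 dvd prod id Pw" by (rule dvd_prodI[OF fin])
  hence "2 dvd prod id Pw" by simp
  moreover have "prod id Pw > 0" using fin unfolding Pw_def by (intro prod_pos) (auto simp: prime_gt_0_nat)
  ultimately show W2: "2 \<le> WN N" unfolding Wdef by (simp add: dvd_imp_le)
  have "prod id Pw \<le> prod (\<lambda>_. w) Pw" by (intro prod_mono) (auto simp: Pw_def)
  also have "\<dots> = w ^ card Pw" by simp
  also have "\<dots> \<le> w ^ w"
  proof (intro power_increasing)
    have "Pw \<subseteq> {1..w}"
    proof
      fix x assume "x \<in> Pw"
      hence "prime x" "x \<le> w" unfolding Pw_def by auto
      moreover have "2 \<le> x" using prime_ge_2_nat[OF \<open>prime x\<close>] .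
      ultimately show "x \<in> {1..w}" by simp
    qed
    hence "card Pw \<le> card {1..w}" by (intro card_mono) auto
    thus "card Pw \<le> w" by simp
  qed (use w2 in auto)
  finally have Ww: "WN N \<le> w ^ w" unfolding Wdef .
  have Npos: "real N > 0" "ln (real N) > 0" using N3 by auto
  have "ln (real w ^ w) = real w * ln (real w)" by (rule ln_realpow)
  also have "\<dots> \<le> L * ln L"
  proof (intro mult_mono)
    show "ln (real w) \<le> ln L" using wL w2 by simp
    show "0 \<le> ln (real w)" using w2 by simp
    show "0 \<le> L" using L2 unfolding L_def by simp
  qed (use wL in auto)
  also have "\<dots> \<le> ln (real N)" using LL unfolding L_def .
  finally have lnle: "ln (real w ^ w) \<le> ln (real N)" .
  have pw: "real w ^ w > 0" using w2 by simp
  have "real w ^ w \<le> real N" using lnle ln_le_cancel_iff[OF pw Npos(1)] by simp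
  hence "real (w ^ w) \<le> real N" by (simp only: of_nat_power)
  hence "w ^ w \<le> N" by (simp only: of_nat_le_iff)
  with Ww show "WN N \<le> N" by linarith
  fix p :: nat assume p: "prime p" "wN N < p"
  show "coprime p (WN N)" unfolding Wdef
  proof (rule prod_coprime_right)
    fix q assume "q \<in> Pw"
    hence "prime q" "q \<noteq> p" using p unfolding Pw_def w_def by auto
    thus "coprime p (id q)" using p by (simp add: primes_coprime)
  qed
qed


lemma eventual_facts:
  fixes X0 :: nat
  shows "\<exists>N0::nat. \<forall>N\<ge>N0. ln (ln (real N)) \<ge> 2 \<and>
     ln (ln (real N)) * ln (ln (ln (real N))) \<le> ln (real N) \<and>
     (2 * sqrt (real N) + 2) * ln (real N) \<le> real N / 16 \<and>
     ln (ln (real N)) \<le> sqrt (real N) \<and> real N \<ge> real X0 + 3"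
proof -
  have e1: "eventually (\<lambda>x::real. ln (ln x) \<ge> 2) at_top" by real_asymp
  have e2: "eventually (\<lambda>x::real. ln (ln x) * ln (ln (ln x)) \<le> ln x) at_top" by real_asymp
  have e3: "eventually (\<lambda>x::real. (2 * sqrt x + 2) * ln x \<le> x / 16) at_top" by real_asymp
  have e4: "eventually (\<lambda>x::real. ln (ln x) \<le> sqrt x) at_top" by real_asymp
  have e5: "eventually (\<lambda>x::real. x \<ge> real X0 + 3) at_top" by real_asymp
  have "eventually (\<lambda>x::real. ln (ln x) \<ge> 2 \<and>
     ln (ln x) * ln (ln (ln x)) \<le> ln x \<and>
     (2 * sqrt x + 2) * ln x \<le> x / 16 \<and>
     ln (ln x) \<le> sqrt x \<and> x \<ge> real X0 + 3) at_top"
    using e1 e2 e3 e4 e5 by (intro eventually_conj)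
  from eventually_compose_filterlim[OF this filterlim_real_sequentially]
  show ?thesis by (simp add: eventually_sequentially)
qed


theorem mainTheorem13:
  fixes chi :: "real \<Rightarrow> real" and \<alpha> :: real
  assumes smooth: "smooth_real chi"
    and nonneg: "\<And>x. chi x \<ge> 0"
    and supp: "\<And>x. \<bar>x\<bar> > 1 \<Longrightarrow> chi x = 0"
    and pos0: "chi 0 > 0"
    and norm: "((\<lambda>x. (deriv chi x)\<^sup>2) has_integral 1) {0..}"
    and alpha: "0 < \<alpha>" "\<alpha> < 1/2"
  shows "\<exists>\<delta>>0. \<exists>c>0. \<exists>C>0. \<exists>N0::nat. \<forall>N::nat. prime N \<and> N \<ge> N0 \<longrightarrow>
     (\<exists>b::nat. 1 \<le> b \<and> b < WN N \<and> coprime b (WN N) \<and>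
        (1 / real N) * (\<Sum>n<N. fb \<alpha> N b n) \<ge> \<delta>) \<and>
     (\<forall>b::nat. 1 \<le> b \<and> b < WN N \<and> coprime b (WN N) \<longrightarrow>
        (\<forall>n<N. 0 \<le> fb \<alpha> N b n \<and> fb \<alpha> N b n \<le> c * nub chi \<alpha> N b n
               \<and> fb \<alpha> N b n \<le> C * ln (real N)))"
proof -
  have c1: "chi 1 = 0" by (rule chi_one[OF smooth supp])
  obtain X0 where X0: "\<And>X. X \<ge> X0 \<Longrightarrow> real (card {p. prime p \<and> p \<le> X}) * ln (real X) \<ge> real X / 2"
    using pi_lower by blast
  obtain N0 :: nat where N0: "\<And>N. N \<ge> N0 \<Longrightarrow> ln (ln (real N)) \<ge> 2 \<and>
     ln (ln (real N)) * ln (ln (ln (real N))) \<le> ln (real N) \<and>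
     (2 * sqrt (real N) + 2) * ln (real N) \<le> real N / 16 \<and>
     ln (ln (real N)) \<le> sqrt (real N) \<and> real N \<ge> real X0 + 3"
    using eventual_facts[of X0] by blast
  define c where "c = 2 / (\<alpha> * (chi 0)\<^sup>2)"
  have cpos: "c > 0" unfolding c_def using alpha pos0 by simp
  have main: "(\<exists>b. 1 \<le> b \<and> b < WN N \<and> coprime b (WN N) \<and> \<alpha> / 16 \<le> 1 / real N * (\<Sum>n<N. fb \<alpha> N b n)) \<and>
     (\<forall>b. 1 \<le> b \<and> b < WN N \<and> coprime b (WN N) \<longrightarrow>
        (\<forall>n<N. 0 \<le> fb \<alpha> N b n \<and> fb \<alpha> N b n \<le> c * nub chi \<alpha> N b n
               \<and> fb \<alpha> N b n \<le> 2 * ln (real N)))"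
    if NN: "prime N \<and> N0 \<le> N" for N
  proof (rule conjI[rotated])
    have fN: "ln (ln (real N)) \<ge> 2" "ln (ln (real N)) * ln (ln (ln (real N))) \<le> ln (real N)"
      "(2 * sqrt (real N) + 2) * ln (real N) \<le> real N / 16"
      "ln (ln (real N)) \<le> sqrt (real N)" "real N \<ge> real X0 + 3" using N0[of N] NN by auto
    have N3: "N \<ge> 3" using fN(5) by linarith
    note WF = W_facts[OF N3 fN(1) fN(2)]
    define W where "W = WN N"
    define w where "w = wN N"
    define R where "R = RN \<alpha> N"
    define L where "L = ln (ln (real N))"
    have W2: "W \<ge> 2" and WleN: "W \<le> N" and wL: "real w \<le> L"
      using WF unfolding W_def w_def L_def by auto
    have copW: "\<And>p. prime p \<Longrightarrow> w < p \<Longrightarrow> coprime p W" using WF unfolding W_def w_def by auto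
    have Ngt: "real N > 0" "ln (real N) > 0" using N3 by auto
    have Rdef: "R = real N powr \<alpha>" unfolding R_def RN_def ..
    have Rpos: "R > 0" using Ngt unfolding Rdef by simp
    have lnR: "ln R = \<alpha> * ln (real N)" unfolding Rdef using Ngt by (simp add: ln_powr)
    have lnRpos: "ln R > 0" using lnR alpha Ngt by simp
    have Rsqrt: "R \<le> sqrt (real N)"
    proof -
      have "real N powr \<alpha> \<le> real N powr (1/2)" using alpha N3 by (intro powr_mono) auto
      thus ?thesis unfolding Rdef by (simp add: powr_half_sqrt)
    qed
    have phiW: "0 \<le> real (totient W) / real W" "real (totient W) / real W \<le> 1"
      using W2 totient_le[of W] by auto
    have part2: "0 \<le> fb \<alpha> N b n \<and> fb \<alpha> N b n \<le> c * nub chi \<alpha> N b n \<and> fb \<alpha> N b n \<le> 2 * ln (real N)"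
      if b: "1 \<le> b" "b < W" and n: "n < N" for b n
    proof -
      define m where "m = W * n + b"
      have "m < W * (n + 1)" unfolding m_def using b by simp
      also have "\<dots> \<le> W * N" using n by (intro mult_left_mono) auto
      also have "\<dots> \<le> N * N" using WleN by simp
      finally have mN: "m \<le> N * N" by simp
      have mpos: "m > 0" unfolding m_def using b by simp
      have lnm: "ln (real m) \<le> 2 * ln (real N)"
      proof -
        have "ln (real m) \<le> ln (real N * real N)" using mN mpos N3
          by (subst ln_le_cancel_iff) (auto simp flip: of_nat_mult)
        also have "\<dots> = 2 * ln (real N)" using Ngt by (simp add: ln_mult)
        finally show ?thesis .
      qed
      have lnm0: "ln (real m) \<ge> 0" using mpos by simp
      have fbm: "fb \<alpha> N b n = (if real m \<ge> R \<and> prime m then real (totient W) / real W * ln (real m) else 0)"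
        unfolding fb_eq m_def W_def R_def ..
      have nubm: "nub chi \<alpha> N b n = real (totient W) / real W * ln R * (lam chi R m)\<^sup>2"
        unfolding nub_eq m_def W_def R_def ..
      show ?thesis
      proof (cases "real m \<ge> R \<and> prime m")
        case True
        have lam: "lam chi R m = chi 0" using True lnRpos Rpos supp c1 by (intro lam_prime) auto
        have "c * nub chi \<alpha> N b n = real (totient W) / real W * (2 * ln (real N))"
          unfolding nubm lam lnR c_def using alpha pos0 by (simp add: field_simps power2_eq_square)
        moreover have "fb \<alpha> N b n = real (totient W) / real W * ln (real m)" using True fbm by simp
        moreover have "real (totient W) / real W * ln (real m) \<le> real (totient W) / real W * (2 * ln (real N))"
          using lnm phiW by (intro mult_left_mono) auto
        moreover have "real (totient W) / real W * ln (real m) \<le> 1 * ln (real m)"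
          using lnm0 phiW by (intro mult_right_mono) auto
        moreover have "0 \<le> real (totient W) / real W * ln (real m)" using lnm0 phiW by simp
        ultimately show ?thesis using lnm by simp
      next
        case False
        have "0 \<le> nub chi \<alpha> N b n" unfolding nubm using phiW lnRpos by simp
        hence "0 \<le> c * nub chi \<alpha> N b n" using cpos by simp
        moreover have "fb \<alpha> N b n = 0" using False fbm by (simp only: if_False)
        ultimately show ?thesis using Ngt by simp
      qed
    qed
    show "\<forall>b. 1 \<le> b \<and> b < WN N \<and> coprime b (WN N) \<longrightarrow>
        (\<forall>n<N. 0 \<le> fb \<alpha> N b n \<and> fb \<alpha> N b n \<le> c * nub chi \<alpha> N b n
               \<and> fb \<alpha> N b n \<le> 2 * ln (real N))"
      using part2 unfolding W_def by blast
    show "\<exists>b. 1 \<le> b \<and> b < WN N \<and> coprime b (WN N) \<and> \<alpha> / 16 \<le> 1 / real N * (\<Sum>n<N. fb \<alpha> N b n)"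
    proof -
      define B where "B = {b. 1 \<le> b \<and> b < W \<and> coprime b W}"
      define X where "X = W * (N - 1) + 1"
      define P where "P = {p. prime p \<and> p \<le> X \<and> R \<le> real p \<and> w < p}"
      define F where "F b = (\<Sum>n<N. fb \<alpha> N b n)" for b
      define phi where "phi = real (totient W) / real W"
      obtain k where k: "N = Suc k" using N3 by (cases N) auto
      have finB: "finite B" unfolding B_def by (rule finite_subset[of _ "{..<W}"]) auto
      have oneB: "1 \<in> B" unfolding B_def using W2 by simp
      have Bmem: "x \<in> B \<longleftrightarrow> x \<in> totatives W" for x
      proof -
        have "coprime x W \<Longrightarrow> x \<noteq> W" using W2 by auto
        thus ?thesis unfolding B_def in_totatives_iff by auto
      qed
      have Btot: "B = totatives W" using Bmem by blast
      have cardB: "card B = totient W" unfolding Btot totient_def ..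
      have finP: "finite P" unfolding P_def by (rule finite_subset[of _ "{..X}"]) auto
      define g where "g p = (p mod W, p div W)" for p
      have inj: "inj_on g P"
      proof (rule inj_onI)
        fix p q assume "g p = g q"
        hence "p mod W = q mod W" "p div W = q div W" unfolding g_def by auto
        thus "p = q" by (metis div_mult_mod_eq)
      qed
      have gP: "g ` P \<subseteq> B \<times> {..<N}"
      proof
        fix z assume "z \<in> g ` P"
        then obtain p where p: "p \<in> P" "z = g p" by auto
        have pp: "prime p" "p \<le> X" "w < p" using p(1) unfolding P_def by auto
        have cop: "coprime p W" using copW pp by auto
        hence cop2: "coprime (p mod W) W" using W2 by simp
        have "p mod W \<noteq> 0"
        proof
          assume "p mod W = 0"
          hence "coprime 0 W" using cop2 by simp
          thus False using W2 by simp
        qed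
        moreover have "p mod W < W" using W2 by simp
        moreover have "p < W * N"
        proof -
          have "X < W * N" unfolding X_def k using W2 by simp
          thus ?thesis using pp by linarith
        qed
        hence "p div W < N" using W2 by (simp add: div_less_iff_less_mult mult.commute)
        ultimately show "z \<in> B \<times> {..<N}" using cop2 unfolding p(2) g_def B_def by auto
      qed
      have fnn: "0 \<le> fb \<alpha> N b n" if "(b, n) \<in> B \<times> {..<N}" for b n
        using part2[of b n] that unfolding B_def by auto
      have "(\<Sum>b\<in>B. F b) = (\<Sum>(b, n)\<in>B \<times> {..<N}. fb \<alpha> N b n)"
        unfolding F_def by (rule sum.cartesian_product)
      also have "\<dots> \<ge> (\<Sum>z\<in>g ` P. (\<lambda>(b, n). fb \<alpha> N b n) z)"
        using finB gP fnn by (intro sum_mono2) auto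
      finally have S1: "(\<Sum>b\<in>B. F b) \<ge> (\<Sum>z\<in>g ` P. (\<lambda>(b, n). fb \<alpha> N b n) z)" .
      have "(\<Sum>z\<in>g ` P. (\<lambda>(b, n). fb \<alpha> N b n) z) = (\<Sum>p\<in>P. fb \<alpha> N (p mod W) (p div W))"
        by (subst sum.reindex[OF inj]) (simp add: g_def)
      also have "\<dots> = (\<Sum>p\<in>P. phi * ln (real p))"
      proof (intro sum.cong refl)
        fix p assume "p \<in> P"
        hence pp: "prime p" "R \<le> real p" unfolding P_def by auto
        have "WN N * (p div W) + p mod W = p" unfolding W_def by (metis div_mult_mod_eq mult.commute)
        thus "fb \<alpha> N (p mod W) (p div W) = phi * ln (real p)"
          unfolding fb_eq phi_def using pp by (simp add: W_def R_def)
      qed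
      also have "\<dots> = phi * (\<Sum>p\<in>P. ln (real p))" by (simp add: sum_distrib_left)
      finally have S2: "(\<Sum>b\<in>B. F b) \<ge> phi * (\<Sum>p\<in>P. ln (real p))" using S1 by simp
      define piX where "piX = card {p. prime p \<and> p \<le> X}"
      have "{p. prime p \<and> p \<le> X} \<subseteq> P \<union> {..<nat \<lceil>R\<rceil>} \<union> {..w}"
      proof
        fix p assume p: "p \<in> {p. prime p \<and> p \<le> X}"
        show "p \<in> P \<union> {..<nat \<lceil>R\<rceil>} \<union> {..w}"
        proof (cases "R \<le> real p \<and> w < p")
          case True thus ?thesis using p unfolding P_def by auto
        next
          case False
          hence "real p < R \<or> p \<le> w" by auto
          thus ?thesis
          proof
            assume "real p < R"
            hence "int p < \<lceil>R\<rceil>" by (simp add: less_ceiling_iff)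
            hence "p < nat \<lceil>R\<rceil>" by linarith
            thus ?thesis by simp
          qed simp
        qed
      qed
      hence "piX \<le> card (P \<union> {..<nat \<lceil>R\<rceil>} \<union> {..w})" unfolding piX_def using finP
        by (intro card_mono) auto
      also have "\<dots> \<le> card P + nat \<lceil>R\<rceil> + (w + 1)"
        by (rule order.trans[OF card_Un_le]) (use card_Un_le[of P "{..<nat \<lceil>R\<rceil>}"] in simp)
      finally have piX_le: "real piX \<le> real (card P) + real (nat \<lceil>R\<rceil>) + real w + 1" by linarith
      have "real (nat \<lceil>R\<rceil>) \<le> R + 1" using Rpos by linarith
      hence piX_le2: "real piX \<le> real (card P) + R + real w + 2" using piX_le by linarith
      have "k \<le> W * k" using W2 by simp
      hence XN: "X \<ge> N" unfolding X_def k by simp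
      have "W * k \<le> N * k" using WleN by (rule mult_right_mono) simp
      moreover have "N * k + 1 \<le> N * N" unfolding k by simp
      ultimately have XNN: "X \<le> N * N" unfolding X_def k by simp
      have realX: "real X = real W * (real N - 1) + 1" unfolding X_def k by simp
      have Xpos: "real X > 0" using XN N3 by simp
      have piXb: "real piX * ln (real X) \<ge> real X / 2"
        unfolding piX_def by (rule X0) (use XN fN(5) in linarith)
      have lnX: "ln (real X) \<le> 2 * ln (real N)"
      proof -
        have "ln (real X) \<le> ln (real N * real N)" using XNN Xpos Ngt
          by (subst ln_le_cancel_iff) (auto simp flip: of_nat_mult)
        also have "\<dots> = 2 * ln (real N)" using Ngt by (simp add: ln_mult)
        finally show ?thesis .
      qed
      have "real piX * ln (real X) \<le> real piX * (2 * ln (real N))" using lnX by (intro mult_left_mono) auto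
      hence pi_lnN: "real piX * ln (real N) \<ge> real X / 4" using piXb by linarith
      have wsq: "real w \<le> sqrt (real N)" using wL fN(4) unfolding L_def by linarith
      have err: "(R + real w + 2) * ln (real N) \<le> real N / 16"
      proof -
        have "(R + real w + 2) * ln (real N) \<le> (2 * sqrt (real N) + 2) * ln (real N)"
          using Rsqrt wsq Ngt by (intro mult_right_mono) auto
        thus ?thesis using fN(3) by linarith
      qed
      have "real (card P) * ln (real N) \<ge> (real piX - (R + real w + 2)) * ln (real N)"
        using piX_le2 Ngt by (intro mult_right_mono) auto
      moreover have "(real piX - (R + real w + 2)) * ln (real N) = real piX * ln (real N) - (R + real w + 2) * ln (real N)"
        by (simp add: left_diff_distrib)
      ultimately have cardP_ln: "real (card P) * ln (real N) \<ge> real X / 4 - real N / 16"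
        using pi_lnN err by linarith
      have "real W * (real N - 1) - real W * real N / 2 = real W * (real N / 2 - 1)"
        by (simp add: algebra_simps)
      moreover have "real W * (real N / 2 - 1) \<ge> 0" using N3 by (intro mult_nonneg_nonneg) auto
      ultimately have "real X \<ge> real W * real N / 2" unfolding realX by linarith
      hence "real (card P) * ln (real N) \<ge> real W * real N / 8 - real N / 16" using cardP_ln by linarith
      moreover have "real W * real N \<ge> real N" using W2 Ngt by simp
      ultimately have cardP2: "real (card P) * ln (real N) \<ge> real W * real N / 16" by linarith
      have "(\<Sum>p\<in>P. ln (real p)) \<ge> (\<Sum>p\<in>P. ln R)"
      proof (intro sum_mono)
        fix p assume "p \<in> P"
        hence "R \<le> real p" unfolding P_def by auto
        thus "ln R \<le> ln (real p)" using Rpos by simp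
      qed
      also have "(\<Sum>p\<in>P. ln R) = \<alpha> * (real (card P) * ln (real N))" using lnR by simp
      finally have T0: "(\<Sum>p\<in>P. ln (real p)) \<ge> \<alpha> * (real (card P) * ln (real N))" .
      have "\<alpha> * (real W * real N / 16) \<le> \<alpha> * (real (card P) * ln (real N))"
        using cardP2 alpha by (intro mult_left_mono) auto
      hence T: "(\<Sum>p\<in>P. ln (real p)) \<ge> \<alpha> * (real W * real N / 16)" using T0 by linarith
      have phipos: "phi > 0" unfolding phi_def using W2 by (simp add: totient_gt_0_iff)
      have "phi * (\<alpha> * (real W * real N / 16)) \<le> phi * (\<Sum>p\<in>P. ln (real p))"
        using T phipos by (intro mult_left_mono) auto
      hence "(\<Sum>b\<in>B. F b) \<ge> phi * (\<alpha> * (real W * real N / 16))"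
        using S2 by linarith
      then obtain b where b: "b \<in> B" "F b \<ge> phi * (\<alpha> * (real W * real N / 16)) / real (card B)"
        using exists_ge_avg[OF finB] oneB by blast
      have "phi * (\<alpha> * (real W * real N / 16)) / real (card B) = \<alpha> * real N / 16"
        unfolding phi_def cardB using W2 phipos unfolding phi_def by (simp add: field_simps)
      hence "F b \<ge> \<alpha> * real N / 16" using b(2) by linarith
      hence "\<alpha> / 16 \<le> 1 / real N * F b" using Ngt by (simp add: field_simps)
      thus ?thesis using b(1) unfolding B_def F_def W_def by auto
    qed
  qed
  show ?thesis
    apply (rule exI[of _ "\<alpha>/16"], rule conjI, use alpha in simp)
    apply (rule exI[of _ c], rule conjI, rule cpos)
    apply (rule exI[of _ "2::real"], rule conjI, simp)
    apply (rule exI[of _ N0])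
    using main by blast
qed

end
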